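(* Let $M(C,\bar\xi,\pi)$ be a Myller configuration with Darboux frame $(\bar\xi,\bar\mu,\bar v)$ and invariants $G,K,T$ such that $(G(s),K(s))\neq(0,0)$ for all $s$, and suppose $C$ is a $\bar\xi$-helix in $M$ with fixed unit axis $\bar d_\xi$ and constant angle $\theta$, $\langle\bar\xi,\bar d_\xi\rangle=\cos\theta$. Then, for one choice of sign $\epsilon\in\{1,-1\}$, $$\bar d_\xi=(\cos\theta)\bar\xi-\epsilon\sin\theta\frac{K}{\sqrt{G^2+K^2}}\bar\mu+\epsilon\sin\theta\frac{G}{\sqrt{G^2+K^2}}\bar v .$$
   Context: Let $C$ be a smooth curve in Euclidean 3-space $E^3$ parametrized by arclength $s$; primes denote $d/ds$. A Myller configuration $M(C,\bar\xi,\pi)$ consists of a smooth unit vector field $\bar\xi(s)$ along $C$ and a smooth field of oriented planes $\pi(s)$ with $\bar\xi(s)\in\pi(s)$. Let $\bar v(s)$ be the unit normal of $\pi(s)$ and $\bar\mu=\bar v\times\bar\xi$. The Darboux frame $(\bar\xi,\bar\mu,\bar v)$ is positively oriented orthonormal with $\bar\xi'=G\bar\mu+K\bar v$, $\bar\mu'=-G\bar\xi+T\bar v$, $\bar v'=-K\bar\xi-T\bar\mu$ ($G,K,T$: geodesic curvature, normal curvature, geodesic torsion). $C$ is a $\bar\xi$-helix in $M$ if there are a constant unit vector $\bar d_\xi$ (the axis) and a constant $\theta$ with $\langle\bar\xi,\bar d_\xi\rangle=\cos\theta$ along $C$. *)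

theory Defs
  imports "HOL-Analysis.Analysis" "HOL-Analysis.Cross3"
begin

text \<open>A Myller configuration along a curve r parametrized by arclength on an
open interval I: unit field xi, plane field given by its unit normal v,
mu = v x xi, with Darboux equations and continuous invariants G K T.\<close>

definition myller_config ::
  "real set \<Rightarrow> (real \<Rightarrow> real^3) \<Rightarrow> (real \<Rightarrow> real^3) \<Rightarrow> (real \<Rightarrow> real^3) \<Rightarrow> (real \<Rightarrow> real^3)
   \<Rightarrow> (real \<Rightarrow> real) \<Rightarrow> (real \<Rightarrow> real) \<Rightarrow> (real \<Rightarrow> real) \<Rightarrow> bool" where
  "myller_config I r xi mu v G K T \<longleftrightarrow>
     open I \<and> is_interval I \<and> I \<noteq> {} \<and>
     (\<forall>s\<in>I. r differentiable at s \<and> norm (vector_derivative r (at s)) = 1) \<and>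
     (\<forall>s\<in>I. norm (xi s) = 1 \<and> norm (v s) = 1 \<and> xi s \<bullet> v s = 0 \<and>
             mu s = cross3 (v s) (xi s)) \<and>
     continuous_on I G \<and> continuous_on I K \<and> continuous_on I T \<and>
     (\<forall>s\<in>I. (xi has_vector_derivative (G s *\<^sub>R mu s + K s *\<^sub>R v s)) (at s)) \<and>
     (\<forall>s\<in>I. (mu has_vector_derivative (- G s *\<^sub>R xi s + T s *\<^sub>R v s)) (at s)) \<and>
     (\<forall>s\<in>I. (v has_vector_derivative (- K s *\<^sub>R xi s - T s *\<^sub>R mu s)) (at s))"

end

theory Submission
  imports Defs
begin

lemma cross_cross_l: "cross3 (cross3 a b) c = (a \<bullet> c) *\<^sub>R b - (b \<bullet> c) *\<^sub>R a"
  using exhaust_3 by (force simp add: cross3_simps)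

lemma frame_decomp:
  fixes x v d :: "real^3"
  assumes "norm x = 1" "norm v = 1" "x \<bullet> v = 0"
  shows "d = (d \<bullet> x) *\<^sub>R x + (d \<bullet> cross3 v x) *\<^sub>R cross3 v x + (d \<bullet> v) *\<^sub>R v"
    and "norm (cross3 v x) = 1" "x \<bullet> cross3 v x = 0" "v \<bullet> cross3 v x = 0"
proof -
  have nm: "(norm (cross3 v x))\<^sup>2 = 1" using norm_cross_dot[of v x] assms by (simp add: inner_commute)
  then show n1: "norm (cross3 v x) = 1" by (smt (verit) norm_ge_zero power2_eq_1_iff)
  show o1: "x \<bullet> cross3 v x = 0" "v \<bullet> cross3 v x = 0" by (simp_all add: dot_cross_self)
  define m where "m = cross3 v x"
  define w where "w = d - ((d \<bullet> x) *\<^sub>R x + (d \<bullet> m) *\<^sub>R m + (d \<bullet> v) *\<^sub>R v)"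
  have xx: "x \<bullet> x = 1" using assms by (simp add: dot_square_norm)
  have vv: "v \<bullet> v = 1" using assms by (simp add: dot_square_norm)
  have mm: "m \<bullet> m = 1" using n1 unfolding m_def by (simp add: dot_square_norm)
  have xm: "x \<bullet> m = 0" "v \<bullet> m = 0" using o1 m_def by auto
  have wx: "x \<bullet> w = 0" unfolding w_def using xx xm assms(3)
    by (simp add: inner_diff_right inner_add_right inner_commute)
  have wv: "v \<bullet> w = 0" unfolding w_def using vv xm assms(3)
    by (simp add: inner_diff_right inner_add_right inner_commute)
  have wm: "m \<bullet> w = 0" unfolding w_def using mm xm assms(3)
    by (simp add: inner_diff_right inner_add_right inner_commute)
  have "cross3 m w = 0" unfolding m_def cross_cross_l using wx wv by simp
  with wm have "m = 0 \<or> w = 0" using norm_and_cross_eq_0 by blast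
  moreover have "m \<noteq> 0" using mm by auto
  ultimately have "w = 0" by blast
  then show "d = (d \<bullet> x) *\<^sub>R x + (d \<bullet> cross3 v x) *\<^sub>R cross3 v x + (d \<bullet> v) *\<^sub>R v"
    unfolding w_def m_def by simp
qed

lemma div_expand: "(S::real) \<noteq> 0 \<Longrightarrow> x / S = (S * x) / (S * S)"
  by simp

lemma ab_formula:
  fixes a b g k sn :: real
  assumes "g * a + k * b = 0" "a\<^sup>2 + b\<^sup>2 = sn\<^sup>2" "sn \<noteq> 0" "(g, k) \<noteq> (0, 0)"
  defines "e \<equiv> (b * g - a * k) / (sn * sqrt (g\<^sup>2 + k\<^sup>2))"
  shows "a = - (e * sn * k / sqrt (g\<^sup>2 + k\<^sup>2))" "b = e * sn * g / sqrt (g\<^sup>2 + k\<^sup>2)"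
    "e = 1 \<or> e = -1"
proof -
  have N: "g\<^sup>2 + k\<^sup>2 > 0" using assms(4) by (auto simp: sum_power2_gt_zero_iff)
  have sq: "sqrt (g\<^sup>2 + k\<^sup>2) * sqrt (g\<^sup>2 + k\<^sup>2) = g\<^sup>2 + k\<^sup>2" using N by simp
  have sp: "sqrt (g\<^sup>2 + k\<^sup>2) > 0" using N by simp
  have es: "e * sn * sqrt (g\<^sup>2 + k\<^sup>2) = b * g - a * k" unfolding e_def using sp assms(3) by simp
  have "e * sn * k / sqrt (g\<^sup>2 + k\<^sup>2) = e * sn * sqrt (g\<^sup>2 + k\<^sup>2) * k / (sqrt (g\<^sup>2 + k\<^sup>2) * sqrt (g\<^sup>2 + k\<^sup>2))"
    using div_expand[of "sqrt (g\<^sup>2 + k\<^sup>2)" "e * sn * k"] sp by (simp only: mult_ac)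
  also have "\<dots> = - a"
  proof -
    have h: "b * k = - (g * a)" using assms(1) by (simp add: algebra_simps eq_neg_iff_add_eq_0)
    have "(b * g - a * k) * k = g * (b * k) - a * (k * k)" by (simp add: algebra_simps)
    also have "\<dots> = - a * (g\<^sup>2 + k\<^sup>2)" unfolding h by (simp add: algebra_simps power2_eq_square)
    finally show ?thesis unfolding es sq using N assms(4) by auto
  qed
  finally show "a = - (e * sn * k / sqrt (g\<^sup>2 + k\<^sup>2))" by simp
  have "e * sn * g / sqrt (g\<^sup>2 + k\<^sup>2) = e * sn * sqrt (g\<^sup>2 + k\<^sup>2) * g / (sqrt (g\<^sup>2 + k\<^sup>2) * sqrt (g\<^sup>2 + k\<^sup>2))"
    using div_expand[of "sqrt (g\<^sup>2 + k\<^sup>2)" "e * sn * g"] sp by (simp only: mult_ac)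
  also have "\<dots> = b"
  proof -
    have h: "g * a = - (b * k)" using assms(1) by (simp add: algebra_simps eq_neg_iff_add_eq_0)
    have "(b * g - a * k) * g = b * (g * g) - k * (g * a)" by (simp add: algebra_simps)
    also have "\<dots> = b * (g\<^sup>2 + k\<^sup>2)" unfolding h by (simp add: algebra_simps power2_eq_square)
    finally show ?thesis unfolding es sq using N assms(4) by auto
  qed
  finally show "b = e * sn * g / sqrt (g\<^sup>2 + k\<^sup>2)" by simp
  have "(e * sn * sqrt (g\<^sup>2 + k\<^sup>2))\<^sup>2 = (b * g - a * k)\<^sup>2 + (g * a + k * b)\<^sup>2"
    unfolding es using assms(1) by simp
  also have "\<dots> = (a\<^sup>2 + b\<^sup>2) * (g\<^sup>2 + k\<^sup>2)" by (simp add: algebra_simps power2_eq_square)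
  finally have "e\<^sup>2 * (sn\<^sup>2 * (g\<^sup>2 + k\<^sup>2)) = 1 * (sn\<^sup>2 * (g\<^sup>2 + k\<^sup>2))"
    using assms(2) N by (simp add: power_mult_distrib algebra_simps)
  then have "e\<^sup>2 = 1" using N assms(3) by (subst (asm) mult_right_cancel) auto
  then show "e = 1 \<or> e = -1" using power2_eq_1_iff by blast
qed

theorem corollary7:
  fixes I :: "real set" and r xi mu v :: "real \<Rightarrow> real^3"
    and G K T :: "real \<Rightarrow> real" and d :: "real^3" and \<theta> :: real
  assumes "myller_config I r xi mu v G K T"
    and "\<forall>s\<in>I. (G s, K s) \<noteq> (0, 0)"
    and "norm d = 1"
    and "\<forall>s\<in>I. xi s \<bullet> d = cos \<theta>"
  shows "\<exists>\<epsilon>\<in>{1, -1::real}. \<forall>s\<in>I.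
           d = cos \<theta> *\<^sub>R xi s
               - (\<epsilon> * sin \<theta> * K s / sqrt ((G s)\<^sup>2 + (K s)\<^sup>2)) *\<^sub>R mu s
               + (\<epsilon> * sin \<theta> * G s / sqrt ((G s)\<^sup>2 + (K s)\<^sup>2)) *\<^sub>R v s"
proof -
  note M = assms(1)[unfolded myller_config_def]
  have opI: "open I" and ivI: "is_interval I" and neI: "I \<noteq> {}" using M by auto
  have fr: "\<And>s. s \<in> I \<Longrightarrow> norm (xi s) = 1 \<and> norm (v s) = 1 \<and> xi s \<bullet> v s = 0 \<and> mu s = cross3 (v s) (xi s)"
    using M by blast
  have cG: "continuous_on I G" and cK: "continuous_on I K" using M by auto
  have dxi: "\<And>s. s \<in> I \<Longrightarrow> (xi has_vector_derivative (G s *\<^sub>R mu s + K s *\<^sub>R v s)) (at s)"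
    using M by blast
  have dmu: "\<And>s. s \<in> I \<Longrightarrow> (mu has_vector_derivative (- G s *\<^sub>R xi s + T s *\<^sub>R v s)) (at s)"
    using M by blast
  have dv: "\<And>s. s \<in> I \<Longrightarrow> (v has_vector_derivative (- K s *\<^sub>R xi s - T s *\<^sub>R mu s)) (at s)"
    using M by blast
  define a where "a s = mu s \<bullet> d" for s
  define b where "b s = v s \<bullet> d" for s
  have key1: "G s * a s + K s * b s = 0" if s: "s \<in> I" for s
  proof -
    define X where "X = G s *\<^sub>R mu s + K s *\<^sub>R v s"
    have "((\<lambda>t. xi t \<bullet> d) has_derivative (\<lambda>h. (h *\<^sub>R X) \<bullet> d)) (at s)"
      using has_derivative_inner_left[OF dxi[OF s, unfolded has_vector_derivative_def]]
      unfolding X_def by simp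
    then have "((\<lambda>t. cos \<theta>) has_derivative (\<lambda>h. (h *\<^sub>R X) \<bullet> d)) (at s)"
      by (rule has_derivative_transform_within_open[OF _ opI s]) (use assms(4) in auto)
    moreover have "((\<lambda>t. cos \<theta>) has_derivative (\<lambda>h. 0)) (at s)" by (rule has_derivative_const)
    ultimately have "(\<lambda>h. (h *\<^sub>R X) \<bullet> d) = (\<lambda>h. 0)" by (rule has_derivative_unique)
    then have "X \<bullet> d = 0" by (metis scaleR_one)
    then show ?thesis unfolding X_def a_def b_def by (simp add: inner_add_left)
  qed
  have dec: "d = (d \<bullet> xi s) *\<^sub>R xi s + a s *\<^sub>R mu s + b s *\<^sub>R v s"
    and mn: "norm (mu s) = 1" "xi s \<bullet> mu s = 0" "v s \<bullet> mu s = 0" if s: "s \<in> I" for s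
    using frame_decomp(1)[of "xi s" "v s" d] frame_decomp(2-4)[of "xi s" "v s"] fr[OF s] unfolding a_def b_def
    by (auto simp: inner_commute)
  have key2: "(a s)\<^sup>2 + (b s)\<^sup>2 = (sin \<theta>)\<^sup>2" if s: "s \<in> I" for s
  proof -
    have c: "d \<bullet> xi s = cos \<theta>" using assms(4) s by (simp add: inner_commute)
    have xx: "xi s \<bullet> xi s = 1" "v s \<bullet> v s = 1" "mu s \<bullet> mu s = 1"
      using fr[OF s] mn[OF s] by (simp_all add: dot_square_norm)
    have o: "xi s \<bullet> v s = 0" "xi s \<bullet> mu s = 0" "v s \<bullet> mu s = 0" using fr[OF s] mn[OF s] by auto
    have "1 = d \<bullet> d" using assms(3) by (simp add: dot_square_norm)
    also have "\<dots> = (cos \<theta> *\<^sub>R xi s + a s *\<^sub>R mu s + b s *\<^sub>R v s) \<bullet>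
                    (cos \<theta> *\<^sub>R xi s + a s *\<^sub>R mu s + b s *\<^sub>R v s)"
      using dec[OF s] c by simp
    also have "\<dots> = (cos \<theta>)\<^sup>2 + (a s)\<^sup>2 + (b s)\<^sup>2"
      using xx o by (simp add: inner_add_left inner_add_right inner_commute power2_eq_square)
    finally show ?thesis by (simp add: sin_squared_eq)
  qed
  have main: "d = cos \<theta> *\<^sub>R xi s - (e * sin \<theta> * K s / sqrt ((G s)\<^sup>2 + (K s)\<^sup>2)) *\<^sub>R mu s
               + (e * sin \<theta> * G s / sqrt ((G s)\<^sup>2 + (K s)\<^sup>2)) *\<^sub>R v s"
    if s: "s \<in> I" and ha: "a s = - (e * sin \<theta> * K s / sqrt ((G s)\<^sup>2 + (K s)\<^sup>2))"
      and hb: "b s = e * sin \<theta> * G s / sqrt ((G s)\<^sup>2 + (K s)\<^sup>2)" for s e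
  proof -
    have c: "d \<bullet> xi s = cos \<theta>" using assms(4) s by (simp add: inner_commute)
    show ?thesis using dec[OF s] unfolding c ha hb by simp
  qed
  show ?thesis
  proof (cases "sin \<theta> = 0")
    case True
    have "a s = 0 \<and> b s = 0" if "s \<in> I" for s using key2[OF that] True
      by (simp add: sum_power2_eq_zero_iff)
    then show ?thesis using main True by (intro bexI[of _ 1]) auto
  next
    case False
    define e where "e s = (b s * G s - a s * K s) / (sin \<theta> * sqrt ((G s)\<^sup>2 + (K s)\<^sup>2))" for s
    have ab: "a s = - (e s * sin \<theta> * K s / sqrt ((G s)\<^sup>2 + (K s)\<^sup>2))"
      "b s = e s * sin \<theta> * G s / sqrt ((G s)\<^sup>2 + (K s)\<^sup>2)" "e s = 1 \<or> e s = -1"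
      if s: "s \<in> I" for s
      using ab_formula[OF key1[OF s] key2[OF s] False] assms(2) s unfolding e_def by auto
    have cmu: "continuous_on I mu"
      by (rule continuous_at_imp_continuous_on) (use dmu has_vector_derivative_continuous in blast)
    have cv: "continuous_on I v"
      by (rule continuous_at_imp_continuous_on) (use dv has_vector_derivative_continuous in blast)
    have ca: "continuous_on I a" unfolding a_def by (intro continuous_intros cmu)
    have cb: "continuous_on I b" unfolding b_def by (intro continuous_intros cv)
    have nz: "\<forall>s\<in>I. sin \<theta> * sqrt ((G s)\<^sup>2 + (K s)\<^sup>2) \<noteq> 0"
      using False assms(2) by (auto simp: sum_power2_eq_zero_iff)
    have ce: "continuous_on I e" unfolding e_def
      by (intro continuous_intros ca cb cG cK nz)
    have con: "connected (e ` I)"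
      using connected_continuous_image[OF ce] is_interval_connected[OF ivI] by blast
    obtain s0 where s0: "s0 \<in> I" using neI by blast
    have const: "e s = e s0" if s: "s \<in> I" for s
    proof (rule ccontr)
      assume ne: "e s \<noteq> e s0"
      have "{-1..1} \<subseteq> e ` I"
        using ab(3)[OF s] ab(3)[OF s0] ne s s0
          connected_contains_Icc[OF con, of "e s" "e s0"]
          connected_contains_Icc[OF con, of "e s0" "e s"] by auto
      then have "0 \<in> e ` I" by auto
      then obtain t where "t \<in> I" "e t = 0" by auto
      then show False using ab(3) by force
    qed
    show ?thesis
    proof (rule bexI[of _ "e s0"])
      show "e s0 \<in> {1, -1}" using ab(3)[OF s0] by auto
      show "\<forall>s\<in>I. d = cos \<theta> *\<^sub>R xi s - (e s0 * sin \<theta> * K s / sqrt ((G s)\<^sup>2 + (K s)\<^sup>2)) *\<^sub>R mu s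
               + (e s0 * sin \<theta> * G s / sqrt ((G s)\<^sup>2 + (K s)\<^sup>2)) *\<^sub>R v s"
        using main ab const by metis
    qed
  qed
qed

end
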